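(* Let $d\ge2$ and $k>p\ge1$ be integers. If $T$ is chosen uniformly at random from $\mathcal{C}_k^{(d)}$, then the probability that each of the generations $1,2,\dots,p$ of $T$ contains at most one internal vertex is at least $e^{-p}$.
   Context: A $d$-Catalan tree is a rooted planar tree in which each vertex has $0$ or $d$ children (those with $d$ children are internal); $\mathcal{C}_k^{(d)}$ is the set of such trees with $k$ internal vertices. Generation $j$ is the set of vertices at graph distance $j$ from the root. *)

theory Defs
  imports Complex_Main
begin

datatype ptree = Leaf | Node "ptree list"

fun internal :: "ptree \<Rightarrow> bool" where
  "internal Leaf = False"
| "internal (Node ts) = (ts \<noteq> [])"

fun dary :: "nat \<Rightarrow> ptree \<Rightarrow> bool" where
  "dary d Leaf = True"
| "dary d (Node ts) = ((ts = [] \<or> length ts = d) \<and> (\<forall>t\<in>set ts. dary d t))"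

fun num_internal :: "ptree \<Rightarrow> nat" where
  "num_internal Leaf = 0"
| "num_internal (Node ts) = (if ts = [] then 0 else 1) + sum_list (map num_internal ts)"

fun internal_at :: "nat \<Rightarrow> ptree \<Rightarrow> nat" where
  "internal_at 0 t = (if internal t then 1 else 0)"
| "internal_at (Suc j) Leaf = 0"
| "internal_at (Suc j) (Node ts) = sum_list (map (internal_at j) ts)"

definition catalan_trees :: "nat \<Rightarrow> nat \<Rightarrow> ptree set" where
  "catalan_trees d k = {t. dary d t \<and> num_internal t = k}"

end

theory Submission
  imports Defs
begin


definition gf :: "nat \<Rightarrow> nat \<Rightarrow> nat \<Rightarrow> real" where
 "gf e s m = 2^((e+1)*m+s+1) * (real s+1) * fact((e+2)*m+s) / (fact m * fact((e+1)*m+s+1))"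

lemma gf_id1: "gf e 0 (Suc m) = gf e (e+1) m"
proof -
  define P where "P = (e+2)*m+(e+1)"
  define R where "R = (e+1)*m+(e+1)+1"
  have a: "(e+2)*Suc m + 0 = Suc P" by (simp add: P_def)
  have a2: "(e+2)*m + (e+1) = P" by (simp add: P_def)
  have b: "(e+1)*Suc m+0+1 = R" by (simp add: R_def)
  have c: "(e+1)*m+(e+1)+1 = R" by (simp add: R_def)
  have P1: "real P + 1 = (real e + 2) * (real m + 1)" by (simp add: P_def algebra_simps)
  have nz: "real m + 1 \<noteq> 0" "fact m \<noteq> (0::real)" "fact R \<noteq> (0::real)" "fact P \<noteq> (0::real)" by auto
  have "gf e 0 (Suc m) = 2^R * ((real P+1) * fact P) / ((real m+1) * fact m * fact R)"
    unfolding gf_def a b by (simp add: algebra_simps)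
  also have "\<dots> = 2^R * (real e + 2) * fact P / (fact m * fact R)"
    unfolding P1 using nz by (simp add: divide_simps del: of_nat_fact)
  also have "\<dots> = gf e (e+1) m"
    unfolding gf_def a2 c by (simp add: algebra_simps)
  finally show ?thesis .
qed

lemma gf_id2: "gf e (Suc s) (Suc m) = 2 * gf e s (Suc m) + gf e (s+(e+2)) m"
proof -
  define N where "N = (e+2)*m+(e+2)+s"
  define Q where "Q = (e+1)*m+s+(e+2)"
  have a1: "(e+2)*Suc m + Suc s = Suc N" by (simp add: N_def)
  have a2: "(e+2)*Suc m + s = N" by (simp add: N_def)
  have a3: "(e+2)*m + (s+(e+2)) = N" by (simp add: N_def)
  have b1: "(e+1)*Suc m + Suc s + 1 = Suc Q" by (simp add: Q_def)
  have b2: "(e+1)*Suc m + s + 1 = Q" by (simp add: Q_def)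
  have b3: "(e+1)*m + (s+(e+2)) + 1 = Suc Q" by (simp add: Q_def)
  have poly: "(real s+2)*(real N+1) = (real s+1)*(real Q+1) + (real s+real e+3)*(real m+1)"
    by (simp add: N_def Q_def algebra_simps)
  have nz: "real m + 1 \<noteq> 0" "real Q + 1 \<noteq> 0" "fact m \<noteq> (0::real)" "fact Q \<noteq> (0::real)" by auto
  have "gf e (Suc s) (Suc m) = 2^Q * 2 * (real s+2) * (real N+1) * fact N / ((real m+1) * fact m * ((real Q+1) * fact Q))"
    unfolding gf_def a1 b1 by (simp add: algebra_simps)
  also have "\<dots> = 2^Q * 2 * ((real s+1)*(real Q+1) + (real s+real e+3)*(real m+1)) * fact N / ((real m+1) * fact m * ((real Q+1) * fact Q))"
    using poly by simp
  also have "\<dots> = 2 * (2^Q * (real s + 1) * fact N / ((real m+1) * fact m * fact Q))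
        + 2^Q * 2 * (real (s+(e+2)) + 1) * fact N / (fact m * ((real Q+1) * fact Q))"
    using nz by (simp add: divide_simps del: of_nat_fact) (simp add: algebra_simps)
  also have "\<dots> = 2 * gf e s (Suc m) + gf e (s+(e+2)) m"
    unfolding gf_def a2 b2 a3 b3 by (simp add: algebra_simps)
  finally show ?thesis .
qed


lemma fact_ratio: "(e+1)^j * fact((e+2)*m+j) * fact((e+1)*m+1) \<le> (e+2)^j * fact((e+2)*m) * (fact((e+1)*m+1+j) :: nat)"
proof (induction j)
  case 0 then show ?case by simp
next
  case (Suc j)
  have f: "(e+1) * ((e+2)*m+j+1) \<le> (e+2) * ((e+1)*m+1+j+1)" by (simp add: algebra_simps)
  have "(e+1)^Suc j * fact((e+2)*m+Suc j) * fact((e+1)*m+1)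
      = ((e+1) * ((e+2)*m+j+1)) * ((e+1)^j * fact((e+2)*m+j) * fact((e+1)*m+1))"
    by (simp add: algebra_simps)
  also have "\<dots> \<le> ((e+2) * ((e+1)*m+1+j+1)) * ((e+2)^j * fact((e+2)*m) * fact((e+1)*m+1+j))"
    by (rule mult_mono[OF f Suc.IH]) auto
  also have "\<dots> = (e+2)^Suc j * fact((e+2)*m) * fact((e+1)*m+1+Suc j)"
    by (simp add: algebra_simps)
  finally show ?case .
qed

lemma gf_pos: "gf e s m > 0" unfolding gf_def by (intro divide_pos_pos mult_pos_pos fact_gt_zero) auto

lemma gf_step: "gf e 0 (Suc m) \<le> exp 1 * ((real e+2) * 2^(e+1)) * gf e 0 m"
proof -
  define A where "A = (fact((e+2)*m+(e+1)) :: real)"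
  define B where "B = (fact((e+1)*m+1+(e+1)) :: real)"
  define C where "C = (fact((e+2)*m) :: real)"
  define D where "D = (fact((e+1)*m+1) :: real)"
  have pos: "A > 0" "B > 0" "C > 0" "D > 0" unfolding A_def B_def C_def D_def by (rule fact_gt_zero)+
  have r: "(real e+1)^(e+1) * A * D \<le> (real e+2)^(e+1) * C * B"
  proof -
    have "real ((e+1)^(e+1) * fact((e+2)*m+(e+1)) * fact((e+1)*m+1)) \<le> real ((e+2)^(e+1) * fact((e+2)*m) * (fact((e+1)*m+1+(e+1)) :: nat))"
      using fact_ratio[of e "e+1" m] by linarith
    then show ?thesis unfolding A_def B_def C_def D_def by (simp only: of_nat_mult of_nat_power of_nat_fact of_nat_add of_nat_1 of_nat_numeral)
  qed
  have ex: "((real e+2)/(real e+1))^(e+1) \<le> exp 1"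
  proof -
    have "(real e+2)/(real e+1) = 1 + 1/(real e+1)" by (simp add: field_simps)
    also have "\<dots> \<le> exp (1/(real e+1))" by (rule exp_ge_add_one_self)
    finally have "((real e+2)/(real e+1))^(e+1) \<le> exp (1/(real e+1))^(e+1)"
      by (rule power_mono) simp
    also have "\<dots> = exp (real (e+1) * (1/(real e+1)))" by (rule exp_of_nat_mult[symmetric])
    also have "\<dots> = exp 1" by simp
    finally show ?thesis .
  qed
  have AB: "A / B \<le> exp 1 * (C / D)"
  proof -
    have "A / B \<le> ((real e+2)/(real e+1))^(e+1) * (C / D)"
      using r pos by (simp add: divide_simps power_divide) (simp add: algebra_simps)
    also have "\<dots> \<le> exp 1 * (C / D)"
      using ex pos by (intro mult_right_mono) auto
    finally show ?thesis .
  qed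
  have g0: "gf e 0 m = 2^((e+1)*m+1) * C / (fact m * D)" unfolding gf_def C_def D_def by simp
  have e1: "(e+2)*Suc m + 0 = Suc ((e+2)*m+(e+1))" by simp
  have e2: "(e+1)*Suc m+0+1 = (e+1)*m+1+(e+1)" by simp
  have "gf e 0 (Suc m) = 2^((e+1)*m+1) * 2^(e+1) * ((real e+2) * (real m+1) * A) / ((real m+1) * fact m * B)"
    unfolding gf_def e1 e2 A_def B_def by (simp add: algebra_simps power_add)
  also have "\<dots> = 2^((e+1)*m+1) * 2^(e+1) * (real e+2) / fact m * (A / B)"
    using pos by (simp add: divide_simps del: of_nat_fact)
  also have "\<dots> \<le> 2^((e+1)*m+1) * 2^(e+1) * (real e+2) / fact m * (exp 1 * (C / D))"
    using AB by (intro mult_left_mono) auto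
  also have "\<dots> = exp 1 * ((real e+2) * 2^(e+1)) * gf e 0 m"
    unfolding g0 using pos by (simp add: divide_simps power_add del: of_nat_fact)
  finally show ?thesis .
qed

lemma gf_iter: "gf e 0 (m+p) \<le> (exp 1 * ((real e+2) * 2^(e+1)))^p * gf e 0 m"
proof (induction p)
  case 0 then show ?case by simp
next
  case (Suc p)
  have "gf e 0 (m + Suc p) \<le> exp 1 * ((real e+2) * 2^(e+1)) * gf e 0 (m+p)"
    using gf_step[of e "m+p"] by simp
  also have "\<dots> \<le> exp 1 * ((real e+2) * 2^(e+1)) * ((exp 1 * ((real e+2) * 2^(e+1)))^p * gf e 0 m)"
    using Suc.IH by (intro mult_left_mono) auto
  finally show ?case by (simp add: algebra_simps)
qed


definition LB :: "ptree set" where "LB = {Leaf, Node []}"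
definition Fo :: "nat \<Rightarrow> nat \<Rightarrow> nat \<Rightarrow> ptree list set" where
 "Fo d r m = {ts. length ts = r \<and> (\<forall>t\<in>set ts. dary d t) \<and> sum_list (map num_internal ts) = m}"

lemma LB_iff: "(dary d t \<and> num_internal t = 0) \<longleftrightarrow> t \<in> LB"
  by (cases t) (auto simp: LB_def)

lemma LB_props: "t \<in> LB \<Longrightarrow> dary d t \<and> num_internal t = 0 \<and> internal_at j t = 0"
  by (cases j) (auto simp: LB_def)

lemma finite_LB: "finite LB" and card_LB: "card LB = 2" by (auto simp: LB_def)

lemma Fo_0: "Fo d r 0 = {ts. set ts \<subseteq> LB \<and> length ts = r}"
  unfolding Fo_def using LB_iff by (auto simp: sum_list_eq_0_iff)

lemma Fo_zero_r: "Fo d 0 (Suc m) = {}" by (auto simp: Fo_def)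

lemma Fo_split:
  assumes "d \<ge> 2"
  shows "Fo d (Suc r) (Suc m) = (\<lambda>(t,ts). t#ts) ` (LB \<times> Fo d r (Suc m))
          \<union> (\<lambda>us. Node (take d us) # drop d us) ` Fo d (r+d) m"
proof (rule set_eqI, rule iffI)
  fix ts assume "ts \<in> Fo d (Suc r) (Suc m)"
  then obtain t rest where ts: "ts = t # rest" and lr: "length rest = r"
    and dt: "dary d t" and dr: "\<forall>x\<in>set rest. dary d x"
    and sm: "num_internal t + sum_list (map num_internal rest) = Suc m"
    unfolding Fo_def by (cases ts) auto
  show "ts \<in> (\<lambda>(t,ts). t#ts) ` (LB \<times> Fo d r (Suc m))
          \<union> (\<lambda>us. Node (take d us) # drop d us) ` Fo d (r+d) m"
  proof (cases "t \<in> LB")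
    case True
    then have "num_internal t = 0" using LB_props by blast
    then have "rest \<in> Fo d r (Suc m)" using lr dr sm by (simp add: Fo_def)
    then show ?thesis using True ts by blast
  next
    case False
    then obtain cs where t: "t = Node cs" and cs: "cs \<noteq> []"
      by (cases t) (auto simp: LB_def)
    have lc: "length cs = d" and dc: "\<forall>x\<in>set cs. dary d x" using dt t cs by auto
    have "cs @ rest \<in> Fo d (r+d) m"
      using lc lr dc dr sm t cs by (auto simp: Fo_def)
    moreover have "ts = Node (take d (cs @ rest)) # drop d (cs @ rest)"
      using ts t lc by simp
    ultimately show ?thesis by blast
  qed
next
  fix ts assume "ts \<in> (\<lambda>(t,ts). t#ts) ` (LB \<times> Fo d r (Suc m))
          \<union> (\<lambda>us. Node (take d us) # drop d us) ` Fo d (r+d) m"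
  then show "ts \<in> Fo d (Suc r) (Suc m)"
  proof
    assume "ts \<in> (\<lambda>(t,ts). t#ts) ` (LB \<times> Fo d r (Suc m))"
    then obtain t rest where "ts = t # rest" "t \<in> LB" "rest \<in> Fo d r (Suc m)" by auto
    then show ?thesis using LB_props[of t d 0] by (auto simp: Fo_def)
  next
    assume "ts \<in> (\<lambda>us. Node (take d us) # drop d us) ` Fo d (r+d) m"
    then obtain us where ts: "ts = Node (take d us) # drop d us" and us: "us \<in> Fo d (r+d) m" by auto
    have lu: "length us = r + d" and du: "\<forall>x\<in>set us. dary d x"
      and su: "sum_list (map num_internal us) = m" using us by (auto simp: Fo_def)
    have ne: "take d us \<noteq> []" using lu assms by (cases us) auto
    have "sum_list (map num_internal (take d us)) + sum_list (map num_internal (drop d us)) = m"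
      using su by (metis append_take_drop_id map_append sum_list_append)
    moreover have "\<forall>x\<in>set (take d us). dary d x" "\<forall>x\<in>set (drop d us). dary d x"
      using du by (auto dest: in_set_takeD in_set_dropD)
    ultimately show ?thesis using ts ne lu by (auto simp: Fo_def)
  qed
qed

lemma Fo_count:
  assumes d: "d = e+2"
  shows "finite (Fo d r m) \<and> (\<forall>s. r = Suc s \<longrightarrow> real (card (Fo d r m)) = gf e s m)"
proof (induction m arbitrary: r rule: less_induct)
  case (less m)
  show ?case
  proof (cases m)
    case 0
    have fin: "finite (Fo d r m)" unfolding 0 Fo_0 by (rule finite_lists_length_eq[OF finite_LB])
    moreover have "real (card (Fo d r m)) = 2^r" unfolding 0 Fo_0
      by (simp add: card_lists_length_eq[OF finite_LB] card_LB)
    ultimately show ?thesis unfolding 0 gf_def by (auto simp: add.commute)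
  next
    case (Suc m')
    have IH2: "finite (Fo d (s+d) m') \<and> real (card (Fo d (s+d) m')) = gf e (s+(e+1)) m'" for s
      using less.IH[of m' "s+d"] Suc d by auto
    show ?thesis unfolding Suc
    proof (induction r)
      case 0 then show ?case by (simp add: Fo_zero_r)
    next
      case (Suc s)
      let ?A = "(\<lambda>(t,ts). t#ts) ` (LB \<times> Fo d s (Suc m'))"
      let ?B = "(\<lambda>us. Node (take d us) # drop d us) ` Fo d (s+d) m'"
      have eq: "Fo d (Suc s) (Suc m') = ?A \<union> ?B" using Fo_split[of d s m'] d by simp
      have fA: "finite ?A" using Suc.IH finite_LB by auto
      have fB: "finite ?B" using IH2 by auto
      have disj: "?A \<inter> ?B = {}"
      proof -
        have "take d us \<noteq> []" if "us \<in> Fo d (s+d) m'" for us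
          using that d by (cases us) (auto simp: Fo_def)
        then show ?thesis by (auto simp: LB_def)
      qed
      have cA: "card ?A = 2 * card (Fo d s (Suc m'))"
        by (subst card_image) (auto simp: inj_on_def card_cartesian_product card_LB)
      have cB: "card ?B = card (Fo d (s+d) m')"
      proof (rule card_image, rule inj_onI)
        fix x y assume "Node (take d x) # drop d x = Node (take d y) # drop d y"
        then show "x = y" by (metis append_take_drop_id list.inject ptree.inject)
      qed
      have "real (card (Fo d (Suc s) (Suc m'))) = 2 * real (card (Fo d s (Suc m'))) + gf e (s+(e+1)) m'"
        unfolding eq using card_Un_disjoint[OF fA fB disj] cA cB IH2[of s] by simp
      also have "\<dots> = gf e s (Suc m')"
      proof (cases s)
        case 0
        then show ?thesis using gf_id1[of e m'] by (simp add: Fo_zero_r)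
      next
        case (Suc s')
        then have "real (card (Fo d s (Suc m'))) = gf e s' (Suc m')" using Suc.IH by simp
        then show ?thesis using gf_id2[of e s' m'] Suc by simp
      qed
      finally show ?case using eq fA fB by auto
    qed
  qed
qed


lemma cat_Fo: "(\<lambda>t. [t]) ` catalan_trees d m = Fo d 1 m"
proof (rule set_eqI, rule iffI)
  fix x assume "x \<in> Fo d 1 m"
  then obtain t where "x = [t]" "dary d t" "num_internal t = m"
    unfolding Fo_def by (auto simp: length_Suc_conv)
  then show "x \<in> (\<lambda>t. [t]) ` catalan_trees d m" by (auto simp: catalan_trees_def)
qed (auto simp: catalan_trees_def Fo_def)

lemma cat_count:
  assumes "d = e+2"
  shows "finite (catalan_trees d m)" "real (card (catalan_trees d m)) = gf e 0 m"
proof -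
  have inj: "inj_on (\<lambda>t. [t]) (catalan_trees d m)" by (auto simp: inj_on_def)
  have F: "finite (Fo d 1 m)" "real (card (Fo d 1 m)) = gf e 0 m" using Fo_count[OF assms, of 1 m] by auto
  show "finite (catalan_trees d m)" using F(1) cat_Fo finite_imageD[OF _ inj] by metis
  show "real (card (catalan_trees d m)) = gf e 0 m" using F(2) card_image[OF inj] cat_Fo by metis
qed

definition Sf :: "nat \<Rightarrow> nat \<Rightarrow> nat \<Rightarrow> ptree set" where
  "Sf d p m = {t \<in> catalan_trees d m. \<forall>j\<in>{1..p}. internal_at j t \<le> 1}"

lemma ins_nth:
  assumes "i \<le> length ys" "l < Suc (length ys)" "l \<noteq> i"
  shows "(take i ys @ c # drop i ys) ! l \<in> set ys"
proof (cases "l < i")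
  case True
  then have "(take i ys @ c # drop i ys) ! l = take i ys ! l" using assms by (simp add: nth_append)
  then show ?thesis using True assms by (metis in_set_takeD length_take min.absorb2 nth_mem)
next
  case False
  then obtain q where l: "l = Suc (i + q)" using assms by (metis add_Suc_right less_imp_Suc_add linorder_neqE_nat)
  then have "(take i ys @ c # drop i ys) ! l = drop i ys ! q" using assms by (simp add: nth_append)
  then show ?thesis using l assms by (metis add_less_cancel_left in_set_dropD length_drop le_add_diff_inverse nth_mem Suc_less_eq add_Suc_right)
qed

lemma sum_ins:
  assumes "\<forall>y\<in>set ys. f y = (0::nat)"
  shows "sum_list (map f (take i ys @ c # drop i ys)) = f c"
proof -
  have "sum_list (map f (take i ys)) = 0" "sum_list (map f (drop i ys)) = 0"
    using assms by (auto simp: sum_list_eq_0_iff dest: in_set_takeD in_set_dropD)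
  then show ?thesis by simp
qed

lemma S_step:
  assumes d: "d = e+2" and m: "m \<ge> 1"
  shows "d * 2^(d-1) * card (Sf d p m) \<le> card (Sf d (Suc p) (Suc m))"
proof -
  define Ys where "Ys = {ys. set ys \<subseteq> LB \<and> length ys = d-1}"
  define Phi where "Phi = (\<lambda>(i::nat, ys, c). Node (take i ys @ c # drop i ys))"
  define Dom where "Dom = {0..<d} \<times> Ys \<times> Sf d p m"
  have finS: "finite (Sf d (Suc p) (Suc m))"
    using cat_count(1)[OF d] by (simp add: Sf_def)
  have finS0: "finite (Sf d p m)" using cat_count(1)[OF d] by (simp add: Sf_def)
  have cY: "card Ys = 2^(d-1)" unfolding Ys_def by (simp add: card_lists_length_eq[OF finite_LB] card_LB)
  have cD: "card Dom = d * 2^(d-1) * card (Sf d p m)"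
    unfolding Dom_def by (simp add: card_cartesian_product cY)
  have notLB: "c \<notin> LB" if "c \<in> Sf d p m" for c
    using that m LB_props[of c d 0] by (auto simp: Sf_def catalan_trees_def)
  have sub: "Phi ` Dom \<subseteq> Sf d (Suc p) (Suc m)"
  proof
    fix x assume "x \<in> Phi ` Dom"
    then obtain i ys c where x: "x = Node (take i ys @ c # drop i ys)" and i: "i < d"
      and ys: "set ys \<subseteq> LB" "length ys = d - 1" and c: "c \<in> Sf d p m"
      unfolding Phi_def Dom_def Ys_def by auto
    define L where "L = take i ys @ c # drop i ys"
    have lL: "length L = d" using i ys d by (simp add: L_def)
    have setL: "set L = insert c (set ys)"
      unfolding L_def by (metis Un_insert_right append_take_drop_id insert_commute list.simps(15) set_append)
    have cc: "dary d c" "num_internal c = m" "\<forall>j\<in>{1..p}. internal_at j c \<le> 1"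
      using c by (auto simp: Sf_def catalan_trees_def)
    have y0: "\<forall>y\<in>set ys. dary d y \<and> num_internal y = 0 \<and> internal_at j y = 0" for j
      using ys LB_props by blast
    have dL: "dary d (Node L)" using lL setL cc y0 d by auto
    have nL: "num_internal (Node L) = Suc m"
      using lL d sum_ins[of ys num_internal i c] y0 cc by (auto simp: L_def)
    have iL: "internal_at (Suc j) (Node L) = internal_at j c" for j
      using sum_ins[of ys "internal_at j" i c] y0 by (simp add: L_def)
    have ic: "internal_at 0 c = 1"
      using notLB[OF c] cc(1) by (cases c) (auto simp: LB_def)
    have "\<forall>j\<in>{1..Suc p}. internal_at j (Node L) \<le> 1"
    proof
      fix j assume "j \<in> {1..Suc p}"
      then obtain j' where j: "j = Suc j'" "j' \<le> p" by (cases j) auto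
      show "internal_at j (Node L) \<le> 1"
        using cc(3) ic j iL by (cases j') auto
    qed
    then show "x \<in> Sf d (Suc p) (Suc m)" using dL nL x
      by (simp add: Sf_def catalan_trees_def L_def)
  qed
  have inj: "inj_on Phi Dom"
  proof (rule inj_onI)
    fix a b assume a: "a \<in> Dom" and b: "b \<in> Dom" and eq: "Phi a = Phi b"
    obtain i ys c where av: "a = (i, ys, c)" by (cases a) auto
    obtain i' ys' c' where bv: "b = (i', ys', c')" by (cases b) auto
    have i: "i < d" "set ys \<subseteq> LB" "length ys = d-1" "c \<in> Sf d p m"
      using a av by (auto simp: Dom_def Ys_def)
    have i': "i' < d" "set ys' \<subseteq> LB" "length ys' = d-1" "c' \<in> Sf d p m"
      using b bv by (auto simp: Dom_def Ys_def)
    have L: "take i ys @ c # drop i ys = take i' ys' @ c' # drop i' ys'"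
      using eq av bv by (simp add: Phi_def)
    have n1: "(take i ys @ c # drop i ys) ! i = c" using i d by (simp add: nth_append)
    have n2: "(take i' ys' @ c' # drop i' ys') ! i' = c'" using i' d by (simp add: nth_append)
    have ii: "i = i'"
    proof (rule ccontr)
      assume ne: "i \<noteq> i'"
      have "(take i' ys' @ c' # drop i' ys') ! i \<in> set ys'"
        using ins_nth[of i' ys' i c'] ne i i' d by auto
      then have "c \<in> LB" using L n1 i' by auto
      then show False using notLB i by blast
    qed
    have cc: "c = c'" using L n1 n2 ii by simp
    have "take i ys = take i ys' \<and> c # drop i ys = c # drop i ys'"
      using L ii cc i i' d by (subst append_eq_append_conv[symmetric]) auto
    then have "ys = ys'" by (metis append_take_drop_id list.inject)
    then show "a = b" using av bv ii cc by simp
  qed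
  have "card Dom = card (Phi ` Dom)" using card_image[OF inj] by simp
  also have "\<dots> \<le> card (Sf d (Suc p) (Suc m))" by (rule card_mono[OF finS sub])
  finally show ?thesis using cD by simp
qed

lemma S_iter:
  assumes d: "d = e+2" and m: "m \<ge> 1"
  shows "(d * 2^(d-1))^p * card (catalan_trees d m) \<le> card (Sf d p (m+p))"
proof (induction p)
  case 0 then show ?case by (simp add: Sf_def)
next
  case (Suc p)
  have "(d * 2^(d-1))^Suc p * card (catalan_trees d m) = d * 2^(d-1) * ((d * 2^(d-1))^p * card (catalan_trees d m))"
    by simp
  also have "\<dots> \<le> d * 2^(d-1) * card (Sf d p (m+p))" using Suc.IH by simp
  also have "\<dots> \<le> card (Sf d (Suc p) (Suc (m+p)))" using S_step[OF d, of "m+p" p] m by simp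
  finally show ?case by simp
qed

theorem corollary5p3:
  fixes d k p :: nat
  assumes "d \<ge> 2" and "p \<ge> 1" and "k > p"
  shows "real (card {t \<in> catalan_trees d k. \<forall>j\<in>{1..p}. internal_at j t \<le> 1})
           / real (card (catalan_trees d k)) \<ge> exp (- real p)"
proof -
  obtain e where d: "d = e+2" using assms(1) by (metis add.commute le_Suc_ex)
  define m where "m = k - p"
  have m1: "m \<ge> 1" and k: "k = m + p" using assms by (auto simp: m_def)
  define K where "K = (real e + 2) * 2^(e+1)"
  have K: "real (d * 2^(d-1)) = K" by (simp add: K_def d algebra_simps)
  have a: "K^p * gf e 0 m \<le> real (card (Sf d p k))"
  proof -
    have "real ((d * 2^(d-1))^p * card (catalan_trees d m)) \<le> real (card (Sf d p k))"
      using S_iter[OF d m1, of p] k of_nat_le_iff by blast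
    moreover have "real ((d * 2^(d-1))^p * card (catalan_trees d m)) = K^p * gf e 0 m"
      unfolding of_nat_mult of_nat_power K[symmetric] cat_count(2)[OF d, of m] ..
    ultimately show ?thesis by simp
  qed
  have b: "real (card (catalan_trees d k)) \<le> (exp 1 * K)^p * gf e 0 m"
    using gf_iter[of e m p] cat_count(2)[OF d, of k] k by (simp add: K_def)
  have bpos: "real (card (catalan_trees d k)) > 0" using cat_count(2)[OF d, of k] gf_pos by simp
  have ep: "exp (- real p) * exp 1 ^ p = 1"
    by (simp add: exp_of_nat_mult[symmetric] exp_add[symmetric])
  have "exp (- real p) * real (card (catalan_trees d k)) \<le> exp (- real p) * ((exp 1 * K)^p * gf e 0 m)"
    using b by (intro mult_left_mono) auto
  also have "\<dots> = K^p * gf e 0 m" using ep by (simp add: power_mult_distrib algebra_simps)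
  also have "\<dots> \<le> real (card (Sf d p k))" by (rule a)
  finally show ?thesis using bpos by (simp add: pos_le_divide_eq Sf_def)
qed

end
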